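(* Let $\iota:B\to A$ be a homomorphism of groups and let $q:A\to B$ satisfy (ZL1), (ZL2), (ZL3). Then $\mathrm{Ker}(q)=\{a\in A: q(a)=1_B\}$ is a complement to $\iota(B)$ in $A$, i.e. $\mathrm{Ker}(q)$ is a subgroup of $A$ with $\iota(B)\cap\mathrm{Ker}(q)=\{1_A\}$ and $\iota(B)\,\mathrm{Ker}(q)=A$.
   Context: For a homomorphism $\iota:B\to A$, conditions on $q:A\to B$: (ZL1) $q(1_A)=1_B$; (ZL2) $q(\iota(b)a)=b\,q(a)$ for all $a\in A,b\in B$; (ZL3) $q(aa')=q(a\,\iota(q(a')))$ for all $a,a'\in A$. These maps constitute $\mathcal Z^1(\mathsf T^l_\iota,(B,m_B))$, the algebra structures on the left $B$-set $B$ for the monad $A\otimes_B-$ induced by $\iota$. For subgroups $U,V$ of $A$, $UV=\{uv:u\in U,v\in V\}$. *)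

theory Defs
  imports "HOL-Algebra.Algebra"
begin

definition ZL :: "('b, 'c) monoid_scheme \<Rightarrow> ('a, 'd) monoid_scheme \<Rightarrow> ('b \<Rightarrow> 'a) \<Rightarrow> ('a \<Rightarrow> 'b) \<Rightarrow> bool" where
  "ZL B A iota q \<longleftrightarrow>
     q \<in> carrier A \<rightarrow> carrier B \<and>
     q \<one>\<^bsub>A\<^esub> = \<one>\<^bsub>B\<^esub> \<and>
     (\<forall>a\<in>carrier A. \<forall>b\<in>carrier B. q (iota b \<otimes>\<^bsub>A\<^esub> a) = b \<otimes>\<^bsub>B\<^esub> q a) \<and>
     (\<forall>a\<in>carrier A. \<forall>a'\<in>carrier A. q (a \<otimes>\<^bsub>A\<^esub> a') = q (a \<otimes>\<^bsub>A\<^esub> iota (q a')))"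

end

theory Submission
  imports Defs
begin

theorem proposition4p2:
  fixes A :: "('a, 'c) monoid_scheme" and B :: "('b, 'd) monoid_scheme"
  assumes "group A" and "group B"
    and "iota \<in> hom B A"
    and "ZL B A iota q"
  shows "subgroup {a \<in> carrier A. q a = \<one>\<^bsub>B\<^esub>} A
       \<and> iota ` carrier B \<inter> {a \<in> carrier A. q a = \<one>\<^bsub>B\<^esub>} = {\<one>\<^bsub>A\<^esub>}
       \<and> (iota ` carrier B) <#>\<^bsub>A\<^esub> {a \<in> carrier A. q a = \<one>\<^bsub>B\<^esub>} = carrier A"
proof -
  interpret A: group A by fact
  interpret B: group B by fact
  interpret h: group_hom B A iota using assms unfolding group_hom_def group_hom_axioms_def by auto
  have qc: "\<And>a. a \<in> carrier A \<Longrightarrow> q a \<in> carrier B" and q1: "q \<one>\<^bsub>A\<^esub> = \<one>\<^bsub>B\<^esub>"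
    and q2: "\<And>a b. a \<in> carrier A \<Longrightarrow> b \<in> carrier B \<Longrightarrow> q (iota b \<otimes>\<^bsub>A\<^esub> a) = b \<otimes>\<^bsub>B\<^esub> q a"
    and q3: "\<And>a a'. a \<in> carrier A \<Longrightarrow> a' \<in> carrier A \<Longrightarrow> q (a \<otimes>\<^bsub>A\<^esub> a') = q (a \<otimes>\<^bsub>A\<^esub> iota (q a'))"
    using assms(4) unfolding ZL_def by auto
  let ?K = "{a \<in> carrier A. q a = \<one>\<^bsub>B\<^esub>}"
  have ic: "\<And>b. b \<in> carrier B \<Longrightarrow> iota b \<in> carrier A" by simp
  have sub: "subgroup ?K A"
  proof
    show "?K \<subseteq> carrier A" by auto
    show "\<one>\<^bsub>A\<^esub> \<in> ?K" using q1 by simp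
  next
    fix x y assume x: "x \<in> ?K" and y: "y \<in> ?K"
    have "q (x \<otimes>\<^bsub>A\<^esub> y) = q (x \<otimes>\<^bsub>A\<^esub> iota (q y))" using x y q3 by auto
    also have "\<dots> = q x" using x y by simp
    finally show "x \<otimes>\<^bsub>A\<^esub> y \<in> ?K" using x y by simp
  next
    fix x assume x: "x \<in> ?K"
    have ix: "inv\<^bsub>A\<^esub> x \<in> carrier A" using x by simp
    have "\<one>\<^bsub>B\<^esub> = q (inv\<^bsub>A\<^esub> x \<otimes>\<^bsub>A\<^esub> x)" using x q1 by simp
    also have "\<dots> = q (inv\<^bsub>A\<^esub> x \<otimes>\<^bsub>A\<^esub> iota (q x))" using x ix q3[of "inv\<^bsub>A\<^esub> x" x] by blast
    also have "\<dots> = q (inv\<^bsub>A\<^esub> x)" using x ix by simp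
    finally show "inv\<^bsub>A\<^esub> x \<in> ?K" using ix by simp
  qed
  have qi: "\<And>b. b \<in> carrier B \<Longrightarrow> q (iota b) = b"
  proof -
    fix b assume b: "b \<in> carrier B"
    have "q (iota b) = q (iota b \<otimes>\<^bsub>A\<^esub> \<one>\<^bsub>A\<^esub>)" using b by simp
    also have "\<dots> = b" using q2[of "\<one>\<^bsub>A\<^esub>" b] b q1 by simp
    finally show "q (iota b) = b" .
  qed
  have int: "iota ` carrier B \<inter> ?K = {\<one>\<^bsub>A\<^esub>}"
  proof
    show "iota ` carrier B \<inter> ?K \<subseteq> {\<one>\<^bsub>A\<^esub>}"
    proof
      fix a assume "a \<in> iota ` carrier B \<inter> ?K"
      then obtain b where b: "b \<in> carrier B" "a = iota b" "q a = \<one>\<^bsub>B\<^esub>" by auto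
      then have "b = \<one>\<^bsub>B\<^esub>" using qi by auto
      then show "a \<in> {\<one>\<^bsub>A\<^esub>}" using b by simp
    qed
    show "{\<one>\<^bsub>A\<^esub>} \<subseteq> iota ` carrier B \<inter> ?K"
      using q1 h.hom_one B.one_closed by (auto intro!: image_eqI[of _ _ "\<one>\<^bsub>B\<^esub>"])
  qed
  have prod: "(iota ` carrier B) <#>\<^bsub>A\<^esub> ?K = carrier A"
  proof
    show "(iota ` carrier B) <#>\<^bsub>A\<^esub> ?K \<subseteq> carrier A"
      by (auto simp: set_mult_def)
    show "carrier A \<subseteq> (iota ` carrier B) <#>\<^bsub>A\<^esub> ?K"
    proof
      fix a assume a: "a \<in> carrier A"
      define b where "b = q a"
      have b: "b \<in> carrier B" using a qc b_def by simp
      define k where "k = iota (inv\<^bsub>B\<^esub> b) \<otimes>\<^bsub>A\<^esub> a"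
      have kc: "k \<in> carrier A" using a b k_def by simp
      have "q k = inv\<^bsub>B\<^esub> b \<otimes>\<^bsub>B\<^esub> q a" unfolding k_def using q2[of a "inv\<^bsub>B\<^esub> b"] a b by simp
      then have qk: "q k = \<one>\<^bsub>B\<^esub>" using b b_def by simp
      have "iota b \<otimes>\<^bsub>A\<^esub> k = a"
        using a b unfolding k_def
        by (simp add: A.m_assoc[symmetric] h.hom_mult[symmetric] B.r_inv)
      then show "a \<in> (iota ` carrier B) <#>\<^bsub>A\<^esub> ?K"
        unfolding set_mult_def using b kc qk by (auto intro!: bexI[of _ k])
    qed
  qed
  show ?thesis using sub int prod by blast
qed

end
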